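(* Assume the setting described in the context (including the assumption on $K_1$). Let $\mathbb X_L$ be a Banach space with a continuous embedding $\mathbb X_L\subset\mathbb X_A$. Let $0<\xi<\theta<1$, $\delta,\varrho>0$, $c_r\ge c_l>0$ and $C_D>c_D>1$. Suppose there is a continuous embedding $(\mathbb X_A,K_1)_{\xi,1}\subset\mathbb X_L$. Let $x\in\mathbb X$ with $x\in(\mathbb X_A,K_1)_{\theta,\infty}$ and $\|x\|_{(\mathbb X_A,K_1)_{\theta,\infty}}\le\varrho$, let $g^\delta\in\mathbb Y$ with $\|g^\delta-Ax\|_{\mathbb Y}\le\delta$, let $\alpha>0$ and $\hat x_\alpha\in R_\alpha(g^\delta)$. Then there is a constant $C>0$ independent of $x,\delta,\varrho,g^\delta$ such that whenever either $$c_l\varrho^{-\frac{u-1}{\theta}}\delta^{\frac{(1-\theta)(u-1)+\theta}{\theta}}\le\alpha\le c_r\varrho^{-\frac{u-1}{\theta}}\delta^{\frac{(1-\theta)(u-1)+\theta}{\theta}}\quad\text{or}\quad c_D\delta\le\|g^\delta-A\hat x_\alpha\|_{\mathbb Y}\le C_D\delta,$$ we have $x-\hat x_\alpha\in\mathbb X_L$ and $\|x-\hat x_\alpha\|_{\mathbb X_L}\le C\varrho^{\xi/\theta}\delta^{1-\xi/\theta}$.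
   Context: Banach-space setting: $\mathbb X$, $\mathbb X_A$ are real Banach spaces with a continuous dense embedding $\mathbb X\subset\mathbb X_A$; $\mathbb Y$ is a real Hilbert space; $A:\mathbb X_A\to\mathbb Y$ is bounded linear and there is $M\ge1$ with $\frac1M\|x\|_{\mathbb X_A}\le\|Ax\|_{\mathbb Y}\le M\|x\|_{\mathbb X_A}$ for all $x\in\mathbb X_A$ (we also write $A$ for its restriction to $\mathbb X$). Fix $u\in(1,\infty)$ and $\mathcal R(x):=\frac1u\|x\|_{\mathbb X}^u$ on $\mathbb X$. If $\mathbb X$ is not reflexive, assume there is a topology $\tau$ on $\mathbb X$ making it a locally convex Hausdorff space in which the sublevel sets of $\mathcal R$ are $\tau$-compact and $A|_{\mathbb X}$ is $\tau$-to-weak continuous (if $\mathbb X$ is reflexive this holds with $\tau$ the weak topology). For $\alpha>0$, $g\in\mathbb Y$: $T_\alpha(x,g):=\frac1{2\alpha}\|g-Ax\|_{\mathbb Y}^2+\mathcal R(x)$, $R_\alpha(g):=\operatorname{argmin}_{x\in\mathbb X}T_\alpha(x,g)$. For $\nu\ge0$, $\varrho_\nu(x):=\sup\{\alpha^{-\nu}\|Ax-Ax_\alpha\|_{\mathbb Y}:\alpha>0,\ x_\alpha\in R_\alpha(Ax)\}$ for $x\in\mathbb X$, and $K_1:=\{x\in\mathbb X:\varrho_1(x)<\infty\}$. Assumption on $K_1$: $K_1$ is a vector space carrying a quasi-norm $\|\cdot\|_{\mathrm{lin}}$ under which it is complete (a quasi-Banach space), and $\frac1M\varrho_1(x)\le\|x\|_{\mathrm{lin}}^{u-1}\le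 M\varrho_1(x)$ for all $x\in K_1$. Real interpolation: for a quasi-normed space $\mathbb X_S\subset\mathbb X_A$ and $x\in\mathbb X_A$, $t>0$, let $K(x,t):=\inf_{z\in\mathbb X_S}(\|x-z\|_{\mathbb X_A}+t\|z\|_{\mathbb X_S})$. For $\theta\in(0,1)$, $(\mathbb X_A,\mathbb X_S)_{\theta,\infty}$ consists of $x\in\mathbb X_A$ with $\|x\|_{\theta,\infty}:=\sup_{t>0}t^{-\theta}K(x,t)<\infty$, and for $q\in(0,\infty)$, $(\mathbb X_A,\mathbb X_S)_{\theta,q}$ consists of $x\in\mathbb X_A$ with $\|x\|_{\theta,q}:=\big(\int_0^\infty(t^{-\theta}K(x,t))^q\frac{dt}{t}\big)^{1/q}<\infty$. *)

theory Defs
  imports "HOL-Analysis.Analysis"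
begin

text \<open>A (complete) normed space realised as a linear subspace S of the ambient
  space X_A, carrying its own norm n.\<close>

definition normed_subspace :: "'a::real_vector set \<Rightarrow> ('a \<Rightarrow> real) \<Rightarrow> bool" where
  "normed_subspace S n \<longleftrightarrow> subspace S \<and>
     (\<forall>x\<in>S. 0 \<le> n x \<and> (n x = 0 \<longleftrightarrow> x = 0)) \<and>
     (\<forall>c. \<forall>x\<in>S. n (c *\<^sub>R x) = \<bar>c\<bar> * n x) \<and>
     (\<forall>x\<in>S. \<forall>y\<in>S. n (x + y) \<le> n x + n y)"

definition complete_wrt :: "'a::real_vector set \<Rightarrow> ('a \<Rightarrow> real) \<Rightarrow> bool" where
  "complete_wrt S n \<longleftrightarrow> (\<forall>f. (\<forall>k. f k \<in> S) \<and>
      (\<forall>e>0. \<exists>N. \<forall>i\<ge>N. \<forall>j\<ge>N. n (f i - f j) < e) \<longrightarrow>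
      (\<exists>l\<in>S. (\<lambda>k. n (f k - l)) \<longlonglongrightarrow> 0))"

definition banach_subspace :: "'a::real_vector set \<Rightarrow> ('a \<Rightarrow> real) \<Rightarrow> bool" where
  "banach_subspace S n \<longleftrightarrow> normed_subspace S n \<and> complete_wrt S n"

definition quasi_normed_subspace :: "'a::real_vector set \<Rightarrow> ('a \<Rightarrow> real) \<Rightarrow> bool" where
  "quasi_normed_subspace S n \<longleftrightarrow> subspace S \<and>
     (\<forall>x\<in>S. 0 \<le> n x \<and> (n x = 0 \<longleftrightarrow> x = 0)) \<and>
     (\<forall>c. \<forall>x\<in>S. n (c *\<^sub>R x) = \<bar>c\<bar> * n x) \<and>
     (\<exists>K\<ge>1. \<forall>x\<in>S. \<forall>y\<in>S. n (x + y) \<le> K * (n x + n y))"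

definition quasi_banach_subspace :: "'a::real_vector set \<Rightarrow> ('a \<Rightarrow> real) \<Rightarrow> bool" where
  "quasi_banach_subspace S n \<longleftrightarrow> quasi_normed_subspace S n \<and> complete_wrt S n"

definition lc_vector_topology :: "'a::real_vector set \<Rightarrow> 'a topology \<Rightarrow> bool" where
  "lc_vector_topology S \<tau> \<longleftrightarrow> topspace \<tau> = S \<and> Hausdorff_space \<tau> \<and>
     continuous_map (prod_topology \<tau> \<tau>) \<tau> (\<lambda>(x, y). x + y) \<and>
     continuous_map (prod_topology euclideanreal \<tau>) \<tau> (\<lambda>(c, x). c *\<^sub>R x) \<and>
     (\<forall>U x. openin \<tau> U \<and> x \<in> U \<longrightarrow> (\<exists>V. openin \<tau> V \<and> convex V \<and> x \<in> V \<and> V \<subseteq> U))"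

definition Rpen :: "('a \<Rightarrow> real) \<Rightarrow> real \<Rightarrow> 'a \<Rightarrow> real" where
  "Rpen nX u x = (1 / u) * (nX x) powr u"

definition Tfun :: "('a \<Rightarrow> 'y::real_normed_vector) \<Rightarrow> ('a \<Rightarrow> real) \<Rightarrow> real \<Rightarrow> real \<Rightarrow> 'a \<Rightarrow> 'y \<Rightarrow> real" where
  "Tfun A nX u \<alpha> x g = (1 / (2 * \<alpha>)) * (norm (g - A x))\<^sup>2 + Rpen nX u x"

definition Rmin :: "('a \<Rightarrow> 'y::real_normed_vector) \<Rightarrow> 'a set \<Rightarrow> ('a \<Rightarrow> real) \<Rightarrow> real \<Rightarrow> real \<Rightarrow> 'y \<Rightarrow> 'a set" where
  "Rmin A S nX u \<alpha> g = {x \<in> S. \<forall>y\<in>S. Tfun A nX u \<alpha> x g \<le> Tfun A nX u \<alpha> y g}"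

definition rho :: "('a \<Rightarrow> 'y::real_normed_vector) \<Rightarrow> 'a set \<Rightarrow> ('a \<Rightarrow> real) \<Rightarrow> real \<Rightarrow> real \<Rightarrow> 'a \<Rightarrow> ereal" where
  "rho A S nX u \<nu> x = (SUP p \<in> {(\<alpha>, xa). \<alpha> > 0 \<and> xa \<in> Rmin A S nX u \<alpha> (A x)}.
      ereal (fst p powr (- \<nu>) * norm (A x - A (snd p))))"

definition K1set :: "('a \<Rightarrow> 'y::real_normed_vector) \<Rightarrow> 'a set \<Rightarrow> ('a \<Rightarrow> real) \<Rightarrow> real \<Rightarrow> 'a set" where
  "K1set A S nX u = {x \<in> S. rho A S nX u 1 x < \<infinity>}"

text \<open>Real interpolation (K-method) between X_A (ambient, norm) and a quasi-normed Xs.\<close>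

definition Kfun :: "'a::real_normed_vector set \<Rightarrow> ('a \<Rightarrow> real) \<Rightarrow> 'a \<Rightarrow> real \<Rightarrow> real" where
  "Kfun Xs ns x t = Inf ((\<lambda>z. norm (x - z) + t * ns z) ` Xs)"

definition interp_inf_norm :: "'a::real_normed_vector set \<Rightarrow> ('a \<Rightarrow> real) \<Rightarrow> real \<Rightarrow> 'a \<Rightarrow> ereal" where
  "interp_inf_norm Xs ns \<theta> x = (SUP t \<in> {0<..}. ereal (t powr (- \<theta>) * Kfun Xs ns x t))"

definition interp_inf_space :: "'a::real_normed_vector set \<Rightarrow> ('a \<Rightarrow> real) \<Rightarrow> real \<Rightarrow> 'a set" where
  "interp_inf_space Xs ns \<theta> = {x. interp_inf_norm Xs ns \<theta> x < \<infinity>}"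

definition interp_q_integral :: "'a::real_normed_vector set \<Rightarrow> ('a \<Rightarrow> real) \<Rightarrow> real \<Rightarrow> real \<Rightarrow> 'a \<Rightarrow> ennreal" where
  "interp_q_integral Xs ns \<theta> q x =
     (\<integral>\<^sup>+ t. ennreal ((t powr (- \<theta>) * Kfun Xs ns x t) powr q / t) * indicator {0<..} t \<partial>lborel)"

definition interp_q_space :: "'a::real_normed_vector set \<Rightarrow> ('a \<Rightarrow> real) \<Rightarrow> real \<Rightarrow> real \<Rightarrow> 'a set" where
  "interp_q_space Xs ns \<theta> q = {x. interp_q_integral Xs ns \<theta> q x < \<infinity>}"

definition interp_q_norm :: "'a::real_normed_vector set \<Rightarrow> ('a \<Rightarrow> real) \<Rightarrow> real \<Rightarrow> real \<Rightarrow> 'a \<Rightarrow> real" where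
  "interp_q_norm Xs ns \<theta> q x = (enn2real (interp_q_integral Xs ns \<theta> q x)) powr (1 / q)"

end

theory Submission
  imports Defs
begin

lemma ns_zero: assumes "normed_subspace S n" shows "n 0 = 0"
proof -
  have "subspace S" using assms by (simp add: normed_subspace_def)
  hence "0 \<in> S" by (simp add: subspace_0)
  thus ?thesis using assms unfolding normed_subspace_def by auto
qed

lemma ns_conv:
  assumes "normed_subspace S n" "a \<in> S" "b \<in> S" "0 \<le> t" "t \<le> 1"
  shows "n ((1 - t) *\<^sub>R a + t *\<^sub>R b) \<le> (1 - t) * n a + t * n b"
proof -
  have sub: "subspace S" using assms(1) by (simp add: normed_subspace_def)
  have "(1 - t) *\<^sub>R a \<in> S" "t *\<^sub>R b \<in> S" using sub assms by (auto simp: subspace_scale)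
  hence "n ((1 - t) *\<^sub>R a + t *\<^sub>R b) \<le> n ((1 - t) *\<^sub>R a) + n (t *\<^sub>R b)"
    using assms(1) unfolding normed_subspace_def by blast
  also have "\<dots> = (1 - t) * n a + t * n b"
    using assms unfolding normed_subspace_def by auto
  finally show ?thesis .
qed

lemma powr_conv0:
  fixes a b t p :: real
  assumes "0 \<le> a" "0 \<le> b" "0 \<le> t" "t \<le> 1" "p \<ge> 1"
  shows "((1 - t) * a + t * b) powr p \<le> (1 - t) * a powr p + t * b powr p"
proof (cases "a = 0 \<or> b = 0")
  case True
  have tp: "s powr p \<le> s" if "0 \<le> s" "s \<le> 1" for s :: real
  proof (cases "s = 0")
    case False
    hence "s powr p \<le> s powr 1" using that assms(5) by (intro powr_mono') auto
    thus ?thesis using that by simp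
  qed simp
  show ?thesis
  proof (cases "a = 0")
    case True
    have "(t * b) powr p = t powr p * b powr p" using assms by (simp add: powr_mult)
    also have "\<dots> \<le> t * b powr p" using tp[of t] assms by (intro mult_right_mono) auto
    finally show ?thesis using True by simp
  next
    case False
    hence b0: "b = 0" using True by simp
    have "((1 - t) * a) powr p = (1 - t) powr p * a powr p" using assms by (simp add: powr_mult)
    also have "\<dots> \<le> (1 - t) * a powr p" using tp[of "1 - t"] assms by (intro mult_right_mono) auto
    finally show ?thesis using b0 by simp
  qed
next
  case False
  hence "a > 0" "b > 0" using assms by auto
  thus ?thesis using convex_onD[OF powr_convex[OF assms(5)], of t a b] assms by auto
qed

lemma R_conv:
  assumes "normed_subspace S n" "a \<in> S" "b \<in> S" "0 \<le> t" "t \<le> 1" "u \<ge> 1"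
  shows "Rpen n u ((1 - t) *\<^sub>R a + t *\<^sub>R b) \<le> (1 - t) * Rpen n u a + t * Rpen n u b"
proof -
  have sub: "subspace S" using assms(1) by (simp add: normed_subspace_def)
  have c: "(1 - t) *\<^sub>R a + t *\<^sub>R b \<in> S" using sub assms by (auto simp: subspace_scale subspace_add)
  have nn: "\<And>x. x \<in> S \<Longrightarrow> 0 \<le> n x" using assms(1) unfolding normed_subspace_def by auto
  have "n ((1 - t) *\<^sub>R a + t *\<^sub>R b) powr u \<le> ((1 - t) * n a + t * n b) powr u"
    using ns_conv[OF assms(1-5)] nn[OF c] assms(6) by (intro powr_mono2) auto
  also have "\<dots> \<le> (1 - t) * n a powr u + t * n b powr u"
    using powr_conv0 nn assms by auto
  finally show ?thesis unfolding Rpen_def using assms(6)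
    by (simp add: field_simps divide_right_mono)
qed

lemma Rpen_nonneg: assumes "normed_subspace S n" "x \<in> S" "u > 0" shows "Rpen n u x \<ge> 0"
  using assms unfolding Rpen_def by auto

lemma subgrad:
  fixes A :: "'a::real_vector \<Rightarrow> 'y::real_inner"
  assumes lin: "linear A" and ns: "normed_subspace S nX" and u: "u \<ge> 1" and al: "\<alpha> > 0"
    and xm: "xm \<in> Rmin A S nX u \<alpha> h" and y: "y \<in> S"
  shows "Rpen nX u xm + inner (h - A xm) (A y - A xm) / \<alpha> \<le> Rpen nX u y"
proof (rule ccontr)
  assume neg: "\<not> ?thesis"
  define gap where "gap = Rpen nX u xm + inner (h - A xm) (A y - A xm) / \<alpha> - Rpen nX u y"
  have gp: "gap > 0" using neg unfolding gap_def by simp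
  define a where "a = h - A xm"
  define d where "d = A y - A xm"
  have sub: "subspace S" using ns by (simp add: normed_subspace_def)
  have xmS: "xm \<in> S" and mn: "\<And>z. z \<in> S \<Longrightarrow> Tfun A nX u \<alpha> xm h \<le> Tfun A nX u \<alpha> z h"
    using xm unfolding Rmin_def by auto
  have step: "Rpen nX u xm \<le> Rpen nX u y - inner a d / \<alpha> + t * (norm d)\<^sup>2 / (2 * \<alpha>)"
    if t: "0 < t" "t \<le> 1" for t
  proof -
    define yt where "yt = (1 - t) *\<^sub>R xm + t *\<^sub>R y"
    have ytS: "yt \<in> S" unfolding yt_def using sub xmS y by (auto simp: subspace_scale subspace_add)
    have "A yt = (1 - t) *\<^sub>R A xm + t *\<^sub>R A y" unfolding yt_def
      using lin by (simp add: linear_add linear_scale)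
    hence Ayt: "h - A yt = a - t *\<^sub>R d" unfolding a_def d_def
      by (simp add: algebra_simps)
    have sq: "(norm (a - t *\<^sub>R d))\<^sup>2 = (norm a)\<^sup>2 - 2 * t * inner a d + t\<^sup>2 * (norm d)\<^sup>2"
      unfolding power2_norm_eq_inner
      by (simp add: inner_diff_left inner_diff_right inner_commute algebra_simps power2_eq_square)
    have "Tfun A nX u \<alpha> xm h \<le> Tfun A nX u \<alpha> yt h" using mn ytS by blast
    hence "(norm a)\<^sup>2 / (2 * \<alpha>) + Rpen nX u xm \<le> (norm (a - t *\<^sub>R d))\<^sup>2 / (2 * \<alpha>) + Rpen nX u yt"
      unfolding Tfun_def Ayt a_def by simp
    also have "Rpen nX u yt \<le> (1 - t) * Rpen nX u xm + t * Rpen nX u y"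
      unfolding yt_def using R_conv[OF ns xmS y _ _ u] t by auto
    finally have "(norm a)\<^sup>2 / (2 * \<alpha>) + Rpen nX u xm \<le>
       ((norm a)\<^sup>2 - 2 * t * inner a d + t\<^sup>2 * (norm d)\<^sup>2) / (2 * \<alpha>) + ((1 - t) * Rpen nX u xm + t * Rpen nX u y)"
      using sq by simp
    hence "t * Rpen nX u xm \<le> t * (Rpen nX u y - inner a d / \<alpha> + t * (norm d)\<^sup>2 / (2 * \<alpha>))"
      using al by (simp add: field_simps power2_eq_square)
    thus ?thesis using t by simp
  qed
  define t where "t = (if (norm d)\<^sup>2 = 0 then 1 else min 1 (\<alpha> * gap / (norm d)\<^sup>2))"
  have t0: "0 < t" "t \<le> 1" unfolding t_def using al gp by auto
  have hg: "t * (norm d)\<^sup>2 / (2 * \<alpha>) \<le> gap / 2"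
  proof (cases "(norm d)\<^sup>2 = 0")
    case True thus ?thesis using gp by simp
  next
    case False
    hence pos: "(norm d)\<^sup>2 > 0" by simp
    have "t * (norm d)\<^sup>2 \<le> (\<alpha> * gap / (norm d)\<^sup>2) * (norm d)\<^sup>2"
      unfolding t_def using False pos by (intro mult_right_mono) auto
    also have "\<dots> = \<alpha> * gap" using pos by simp
    finally show ?thesis using al by (simp add: field_simps)
  qed
  from step[OF t0] gp hg show False unfolding gap_def a_def d_def by argo
qed

lemma quad_bound:
  fixes D a b c :: real
  assumes "D\<^sup>2 / (2 * b) \<le> a * D / c" "b > 0" "c > 0" "D \<ge> 0" "a \<ge> 0"
  shows "D \<le> 2 * b * a / c"
proof (cases "D = 0")
  case True
  thus ?thesis using assms by simp
next
  case False
  hence "D > 0" using assms by simp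
  from assms(1) have "D * D * c \<le> 2 * b * a * D" using assms
    by (simp add: field_simps power2_eq_square)
  hence "D * c \<le> 2 * b * a" using \<open>D > 0\<close> by (simp add: mult.commute mult_le_cancel_left_pos)
  thus ?thesis using assms by (simp add: field_simps)
qed

lemma rho_min_bound:
  fixes A :: "'a::real_vector \<Rightarrow> 'y::real_inner"
  assumes lin: "linear A" and ns: "normed_subspace S nX" and u: "u \<ge> 1" and al: "\<alpha> > 0"
    and xm: "xm \<in> Rmin A S nX u \<alpha> h"
  shows "rho A S nX u 1 xm \<le> ereal (2 * norm (h - A xm) / \<alpha>)"
  unfolding rho_def
proof (rule SUP_least)
  fix p assume "p \<in> {(\<alpha>, xa). \<alpha> > 0 \<and> xa \<in> Rmin A S nX u \<alpha> (A xm)}"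
  then obtain \<beta> xb where p: "p = (\<beta>, xb)" and b: "\<beta> > 0" and xb: "xb \<in> Rmin A S nX u \<beta> (A xm)"
    by auto
  have xmS: "xm \<in> S" using xm unfolding Rmin_def by auto
  have xbS: "xb \<in> S" and "Tfun A nX u \<beta> xb (A xm) \<le> Tfun A nX u \<beta> xm (A xm)"
    using xb xmS unfolding Rmin_def by auto
  hence m1: "(norm (A xm - A xb))\<^sup>2 / (2 * \<beta>) + Rpen nX u xb \<le> Rpen nX u xm"
    unfolding Tfun_def by simp
  have m2: "Rpen nX u xm + inner (h - A xm) (A xb - A xm) / \<alpha> \<le> Rpen nX u xb"
    using subgrad[OF lin ns u al xm xbS] .
  have "inner (h - A xm) (A xb - A xm) = - inner (h - A xm) (A xm - A xb)"
    by (simp add: inner_diff_right)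
  also have "- inner (h - A xm) (A xm - A xb) \<le> norm (h - A xm) * norm (A xm - A xb)"
    using Cauchy_Schwarz_ineq2[of "h - A xm" "A xm - A xb"] by (simp add: abs_le_iff)
  finally have ci: "inner (h - A xm) (A xb - A xm) \<le> norm (h - A xm) * norm (A xm - A xb)" .
  have "(norm (A xm - A xb))\<^sup>2 / (2 * \<beta>) \<le> - (inner (h - A xm) (A xb - A xm) / \<alpha>)"
    using m1 m2 by linarith
  also have "\<dots> = (- inner (h - A xm) (A xb - A xm)) / \<alpha>" by simp
  also have "\<dots> \<le> norm (h - A xm) * norm (A xm - A xb) / \<alpha>"
    using al norm_cauchy_schwarz[of "h - A xm" "A xm - A xb"] \<open>inner (h - A xm) (A xb - A xm) = _\<close>
    by (intro divide_right_mono) auto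
  finally have "(norm (A xm - A xb))\<^sup>2 / (2 * \<beta>) \<le> norm (h - A xm) * norm (A xm - A xb) / \<alpha>" .
  hence "norm (A xm - A xb) \<le> 2 * \<beta> * norm (h - A xm) / \<alpha>"
    using quad_bound[of "norm (A xm - A xb)" \<beta> "norm (h - A xm)" \<alpha>] b al by (simp add: mult.commute)
  hence "\<beta> powr (-1) * norm (A xm - A xb) \<le> 2 * norm (h - A xm) / \<alpha>"
    using b by (simp add: powr_minus_divide field_simps)
  thus "ereal (fst p powr (- 1) * norm (A xm - A (snd p))) \<le> ereal (2 * norm (h - A xm) / \<alpha>)"
    using p by simp
qed

lemma key_ineq:
  fixes A :: "'a::real_vector \<Rightarrow> 'y::real_inner"
  assumes lin: "linear A" and ns: "normed_subspace S nX" and u: "u \<ge> 1" and al: "\<alpha> > 0"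
    and za: "za \<in> Rmin A S nX u \<alpha> (A z)" and xh: "xh \<in> Rmin A S nX u \<alpha> g"
  shows "norm (g - A xh) \<le> norm (g - A za) + 2 * norm (A z - A za)"
proof -
  have xhS: "xh \<in> S" using xh unfolding Rmin_def by auto
  have zaS: "za \<in> S" using za unfolding Rmin_def by auto
  have s: "Rpen nX u za + inner (A z - A za) (A xh - A za) / \<alpha> \<le> Rpen nX u xh"
    using subgrad[OF lin ns u al za xhS] .
  have "Tfun A nX u \<alpha> xh g \<le> Tfun A nX u \<alpha> za g" using xh zaS unfolding Rmin_def by auto
  hence m: "(norm (g - A xh))\<^sup>2 / (2 * \<alpha>) + Rpen nX u xh \<le> (norm (g - A za))\<^sup>2 / (2 * \<alpha>) + Rpen nX u za"
    unfolding Tfun_def by simp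
  define a where "a = g - A xh"
  define b where "b = g - A za"
  define v where "v = A z - A za"
  have ba: "A xh - A za = b - a" unfolding a_def b_def by simp
  have "(norm a)\<^sup>2 / (2 * \<alpha>) + inner v (b - a) / \<alpha> \<le> (norm b)\<^sup>2 / (2 * \<alpha>)"
    using m[folded a_def b_def] s[unfolded ba, folded v_def] by argo
  hence "((norm a)\<^sup>2 + 2 * inner v (b - a)) / (2 * \<alpha>) \<le> (norm b)\<^sup>2 / (2 * \<alpha>)"
    using al by (simp add: add_divide_distrib)
  hence "(norm a)\<^sup>2 + 2 * inner v (b - a) \<le> (norm b)\<^sup>2" using al
    by (simp add: divide_le_cancel)
  hence "(norm (a - v))\<^sup>2 \<le> (norm (b - v))\<^sup>2"
    unfolding power2_norm_eq_inner
    by (simp add: inner_diff_left inner_diff_right inner_commute algebra_simps)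
  hence "norm (a - v) \<le> norm (b - v)" by (rule power2_le_imp_le) simp
  moreover have "norm a \<le> norm (a - v) + norm v" using norm_triangle_sub[of a v] by linarith
  moreover have "norm (b - v) \<le> norm b + norm v" by (rule norm_triangle_ineq4)
  ultimately have "norm a \<le> norm b + 2 * norm v" by linarith
  thus ?thesis unfolding a_def b_def v_def .
qed

lemma norm_gt_iff_inner:
  fixes v :: "'y::real_inner"
  assumes "s \<ge> 0"
  shows "s < norm v \<longleftrightarrow> (\<exists>z. norm z \<le> 1 \<and> s < inner v z)"
proof
  assume a: "s < norm v"
  hence "v \<noteq> 0" using assms by auto
  hence "norm (v /\<^sub>R norm v) \<le> 1" "inner v (v /\<^sub>R norm v) = norm v"
    by (auto simp: power2_norm_eq_inner[symmetric] power2_eq_square)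
  thus "\<exists>z. norm z \<le> 1 \<and> s < inner v z" using a by metis
next
  assume "\<exists>z. norm z \<le> 1 \<and> s < inner v z"
  then obtain z where "norm z \<le> 1" "s < inner v z" by auto
  moreover have "inner v z \<le> norm v * norm z" by (rule norm_cauchy_schwarz)
  moreover have "norm v * norm z \<le> norm v" using \<open>norm z \<le> 1\<close>
    by (simp add: mult_left_le)
  ultimately show "s < norm v" by linarith
qed

lemma openin_UN_lt:
  assumes cont: "\<forall>z. continuous_map \<tau> euclideanreal (\<lambda>x. g x z)"
  shows "openin \<tau> (\<Union>z\<in>Z. {x \<in> topspace \<tau>. g x z \<in> {..< c z}})"
proof (rule openin_Union)
  fix T assume "T \<in> (\<lambda>z. {x \<in> topspace \<tau>. g x z \<in> {..< c z}}) ` Z"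
  then obtain z where Tz: "T = {x \<in> topspace \<tau>. g x z \<in> {..< c z}}" by blast
  have "openin euclideanreal {..< c z}" by simp
  thus "openin \<tau> T" unfolding Tz by (rule openin_continuous_map_preimage[OF cont[rule_format, of z]])
qed

lemma exists_min:
  fixes A :: "'a::real_vector \<Rightarrow> 'y::real_inner"
  assumes lin: "linear A" and ns: "normed_subspace S nX" and u: "u \<ge> 1" and b: "\<beta> > 0"
    and lc: "lc_vector_topology S \<tau>"
    and cpt: "\<forall>c. compactin \<tau> {x \<in> S. Rpen nX u x \<le> c}"
    and cont: "\<forall>z. continuous_map \<tau> euclideanreal (\<lambda>x. inner (A x) z)"
  shows "\<exists>xm. xm \<in> Rmin A S nX u \<beta> h"
proof -
  have top: "topspace \<tau> = S" and hd: "Hausdorff_space \<tau>" using lc unfolding lc_vector_topology_def by auto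
  have sub: "subspace S" using ns by (simp add: normed_subspace_def)
  have S0: "0 \<in> S" using sub by (simp add: subspace_0)
  have nn: "\<And>x. x \<in> S \<Longrightarrow> 0 \<le> nX x" using ns unfolding normed_subspace_def by auto
  have Rnn: "\<And>x. x \<in> S \<Longrightarrow> 0 \<le> Rpen nX u x" using Rpen_nonneg[OF ns] u by force
  have R0: "Rpen nX u 0 = 0" unfolding Rpen_def using ns_zero[OF ns] by simp
  define Q where "Q = (\<lambda>x. (norm (h - A x))\<^sup>2 / (2 * \<beta>))"
  define F where "F = (\<lambda>x. Tfun A nX u \<beta> x h)"
  have F_eq: "F x = Q x + Rpen nX u x" for x unfolding F_def Q_def Tfun_def by simp
  have Qnn: "Q x \<ge> 0" for x unfolding Q_def using b by simp
  have o1: "openin \<tau> {x \<in> S. c < Rpen nX u x}" for c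
  proof -
    have "closedin \<tau> {x \<in> S. Rpen nX u x \<le> c}" using compactin_imp_closedin[OF hd] cpt by blast
    hence "openin \<tau> (topspace \<tau> - {x \<in> S. Rpen nX u x \<le> c})" by (rule openin_diff[OF openin_topspace])
    moreover have "topspace \<tau> - {x \<in> S. Rpen nX u x \<le> c} = {x \<in> S. c < Rpen nX u x}" using top by auto
    ultimately show ?thesis by simp
  qed
  have o2: "openin \<tau> {x \<in> S. r < Q x}" for r
  proof (cases "r < 0")
    case True
    hence "{x \<in> S. r < Q x} = topspace \<tau>" using top Qnn by (auto intro: less_le_trans)
    thus ?thesis by simp
  next
    case False
    define s where "s = sqrt (2 * \<beta> * r)"
    have s0: "s \<ge> 0" unfolding s_def using b False by simp
    have ss: "s\<^sup>2 = 2 * \<beta> * r" unfolding s_def using b False by simp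
    have eq1: "r < Q x \<longleftrightarrow> s < norm (h - A x)" for x
    proof -
      have "r < Q x \<longleftrightarrow> 2 * \<beta> * r < (norm (h - A x))\<^sup>2" unfolding Q_def using b
        by (simp add: field_simps)
      also have "\<dots> \<longleftrightarrow> s\<^sup>2 < (norm (h - A x))\<^sup>2" using ss by simp
      also have "\<dots> \<longleftrightarrow> s < norm (h - A x)"
      proof
        assume "s\<^sup>2 < (norm (h - A x))\<^sup>2" thus "s < norm (h - A x)" by (rule power_less_imp_less_base) simp
      next
        assume "s < norm (h - A x)" thus "s\<^sup>2 < (norm (h - A x))\<^sup>2" using s0 by (intro power_strict_mono) auto
      qed
      finally show ?thesis .
    qed
    have seteq: "{x \<in> S. r < Q x} = (\<Union>z\<in>{z. norm z \<le> 1}. {x \<in> topspace \<tau>. inner (A x) z \<in> {..< inner h z - s}})"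
    proof (intro equalityI subsetI)
      fix x assume "x \<in> {x \<in> S. r < Q x}"
      hence x: "x \<in> S" "s < norm (h - A x)" using eq1 by auto
      then obtain z where z: "norm z \<le> 1" "s < inner (h - A x) z" using norm_gt_iff_inner[OF s0] by blast
      hence "inner (A x) z < inner h z - s" by (simp add: inner_diff_left)
      hence "x \<in> {x \<in> topspace \<tau>. inner (A x) z \<in> {..< inner h z - s}}" using x top by simp
      thus "x \<in> (\<Union>z\<in>{z. norm z \<le> 1}. {x \<in> topspace \<tau>. inner (A x) z \<in> {..< inner h z - s}})"
        using z(1) by (intro UN_I[of z]) auto
    next
      fix x assume "x \<in> (\<Union>z\<in>{z. norm z \<le> 1}. {x \<in> topspace \<tau>. inner (A x) z \<in> {..< inner h z - s}})"
      then obtain z where z0: "norm z \<le> 1" "x \<in> {x \<in> topspace \<tau>. inner (A x) z \<in> {..< inner h z - s}}"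
        by (rule UN_E) simp
      hence z: "norm z \<le> 1" "x \<in> S" "inner (A x) z < inner h z - s" using top by auto
      hence "s < inner (h - A x) z" by (simp add: inner_diff_left)
      hence "s < norm (h - A x)" using norm_gt_iff_inner[OF s0] z by blast
      thus "x \<in> {x \<in> S. r < Q x}" using eq1 z by blast
    qed
    have opU: "openin \<tau> (\<Union>z\<in>{z. norm z \<le> 1}. {x \<in> topspace \<tau>. inner (A x) z \<in> {..< inner h z - s}})"
      by (rule openin_UN_lt) (rule cont)
    show ?thesis by (subst seteq) (rule opU)
  qed
  have o3: "openin \<tau> {x \<in> S. a < F x}" for a
  proof -
    have seteq: "{x \<in> S. a < F x} = (\<Union>r. {x \<in> S. r < Q x} \<inter> {x \<in> S. a - r < Rpen nX u x})"
    proof (intro equalityI subsetI)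
      fix x assume "x \<in> {x \<in> S. a < F x}"
      hence x: "x \<in> S" "a < Q x + Rpen nX u x" using F_eq by auto
      define r where "r = Q x - (Q x + Rpen nX u x - a) / 2"
      have "r < Q x" "a - r < Rpen nX u x" unfolding r_def using x by (auto simp: field_simps)
      thus "x \<in> (\<Union>r. {x \<in> S. r < Q x} \<inter> {x \<in> S. a - r < Rpen nX u x})" using x by blast
    qed (auto simp: F_eq)
    show ?thesis unfolding seteq using o1 o2 by (intro openin_Union) auto
  qed
  define Kc where "Kc = {x \<in> S. Rpen nX u x \<le> F 0}"
  have K0: "0 \<in> Kc" unfolding Kc_def using S0 F_eq Qnn R0 by simp
  have KS: "Kc \<subseteq> S" unfolding Kc_def by auto
  define m where "m = Inf (F ` Kc)"
  have bdd: "bdd_below (F ` Kc)" using KS Rnn Qnn F_eq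
    by (intro bdd_belowI[of _ 0]) (force intro: add_nonneg_nonneg)
  have ml: "m \<le> F x" if "x \<in> Kc" for x unfolding m_def using bdd that by (simp add: cInf_lower)
  have "\<exists>xm\<in>Kc. F xm = m"
  proof (rule ccontr)
    assume neg: "\<not> ?thesis"
    hence gt: "m < F x" if "x \<in> Kc" for x using ml[OF that] that by force
    define V where "V = (\<lambda>n::nat. {x \<in> S. m + 1 / real (Suc n) < F x})"
    have cov: "Kc \<subseteq> \<Union>(range V)"
    proof
      fix x assume x: "x \<in> Kc"
      obtain n where "inverse (real (Suc n)) < F x - m" using gt[OF x] reals_Archimedean[of "F x - m"] by auto
      thus "x \<in> \<Union>(range V)" using x KS unfolding V_def by (auto simp: field_simps)
    qed
    have "compactin \<tau> Kc" unfolding Kc_def using cpt by blast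
    moreover have opV: "\<forall>U\<in>range V. openin \<tau> U" unfolding V_def using o3 by blast
    ultimately have "\<exists>F0. finite F0 \<and> F0 \<subseteq> range V \<and> Kc \<subseteq> \<Union>F0"
      using cov unfolding compactin_def by blast
    then obtain F0 where F0: "finite F0" "F0 \<subseteq> range V" "Kc \<subseteq> \<Union>F0" by blast
    then obtain N0 where N0: "finite N0" "F0 = V ` N0" by (metis finite_subset_image subset_UNIV)
    have "N0 \<noteq> {}" using F0(3) K0 N0 by auto
    define N where "N = Max N0"
    have Vm: "V n \<subseteq> V N" if "n \<in> N0" for n
    proof -
      have "n \<le> N" unfolding N_def using N0 that by simp
      hence "1 / real (Suc N) \<le> 1 / real (Suc n)" by (simp add: frac_le)
      thus ?thesis unfolding V_def by auto
    qed
    have "Kc \<subseteq> V N"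
    proof
      fix x assume "x \<in> Kc"
      then obtain U where "U \<in> F0" "x \<in> U" using F0(3) by blast
      then obtain n where "n \<in> N0" "U = V n" using N0(2) by blast
      thus "x \<in> V N" using Vm \<open>x \<in> U\<close> by blast
    qed
    hence lb: "\<forall>x\<in>Kc. m + 1 / real (Suc N) < F x" unfolding V_def by blast
    have "m + 1 / real (Suc N) \<le> Inf (F ` Kc)"
      by (rule cInf_greatest) (use K0 lb in \<open>auto intro: less_imp_le\<close>)
    hence "m + 1 / real (Suc N) \<le> m" unfolding m_def .
    thus False by simp
  qed
  then obtain xm where xm: "xm \<in> Kc" "F xm = m" by auto
  have "\<forall>y\<in>S. F xm \<le> F y"
  proof
    fix y assume y: "y \<in> S"
    show "F xm \<le> F y"
    proof (cases "y \<in> Kc")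
      case True thus ?thesis using ml xm by simp
    next
      case False
      hence "F 0 < Rpen nX u y" using y unfolding Kc_def by auto
      also have "\<dots> \<le> F y" using F_eq Qnn by simp
      finally show ?thesis using ml[OF K0] xm by simp
    qed
  qed
  moreover have "xm \<in> S" using xm(1) KS by blast
  ultimately have "xm \<in> Rmin A S nX u \<beta> h" unfolding Rmin_def F_def by simp
  thus ?thesis by (rule exI)
qed

lemma Kfun_le:
  assumes "z \<in> Xs" "\<forall>z\<in>Xs. ns z \<ge> 0" "t > 0"
  shows "Kfun Xs ns x t \<le> norm (x - z) + t * ns z"
  unfolding Kfun_def
proof (rule cInf_lower)
  show "norm (x - z) + t * ns z \<in> (\<lambda>z. norm (x - z) + t * ns z) ` Xs" using assms by blast
  show "bdd_below ((\<lambda>z. norm (x - z) + t * ns z) ` Xs)"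
    using assms by (intro bdd_belowI[of _ 0]) (auto intro!: add_nonneg_nonneg)
qed

lemma Kfun_nonneg:
  assumes "Xs \<noteq> {}" "\<forall>z\<in>Xs. ns z \<ge> 0" "t > 0"
  shows "Kfun Xs ns x t \<ge> 0"
  unfolding Kfun_def using assms by (intro cInf_greatest) auto

lemma interp_get:
  assumes "interp_inf_norm Xs ns \<theta> x \<le> ereal rr" "t > 0" "rr > 0" "Xs \<noteq> {}" "\<forall>z\<in>Xs. ns z \<ge> 0"
  shows "\<exists>z\<in>Xs. norm (x - z) + t * ns z < 2 * rr * t powr \<theta>"
proof -
  have "ereal (t powr (- \<theta>) * Kfun Xs ns x t) \<le> interp_inf_norm Xs ns \<theta> x"
    unfolding interp_inf_norm_def using assms(2) by (intro SUP_upper) auto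
  hence "t powr (- \<theta>) * Kfun Xs ns x t \<le> rr" using assms(1) by (metis ereal_less_eq(3) order_trans)
  hence "t powr \<theta> * (t powr (- \<theta>) * Kfun Xs ns x t) \<le> t powr \<theta> * rr" by (simp add: mult_left_mono)
  moreover have "t powr \<theta> * t powr (- \<theta>) = 1" using assms(2) by (simp add: powr_add[symmetric])
  ultimately have "Kfun Xs ns x t \<le> rr * t powr \<theta>" by (simp add: mult.assoc[symmetric] mult.commute)
  also have "\<dots> < 2 * rr * t powr \<theta>" using assms by simp
  finally have "Inf ((\<lambda>z. norm (x - z) + t * ns z) ` Xs) < 2 * rr * t powr \<theta>" unfolding Kfun_def .
  from cInf_lessD[OF _ this] assms(4) show ?thesis by auto
qed

lemma int_bound:
  fixes f :: "real \<Rightarrow> real"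
  assumes nn: "\<And>t. t > 0 \<Longrightarrow> 0 \<le> f t"
    and lo: "\<And>t. 0 < t \<Longrightarrow> t \<le> s \<Longrightarrow> f t \<le> a * t powr \<theta>"
    and hi: "\<And>t. t > s \<Longrightarrow> f t \<le> D"
    and s: "s > 0" and xi: "0 < \<xi>" "\<xi> < \<theta>" and a: "a \<ge> 0" and D: "D \<ge> 0"
  shows "(\<integral>\<^sup>+ t. ennreal ((t powr (- \<xi>) * f t) powr 1 / t) * indicator {0<..} t \<partial>lborel)
         \<le> ennreal (a * s powr (\<theta> - \<xi>) / (\<theta> - \<xi>) + D * s powr (- \<xi>) / \<xi>)"
proof -
  define g1 where "g1 = (\<lambda>t::real. a * t powr (\<theta> - \<xi> - 1))"
  define g2 where "g2 = (\<lambda>t::real. D * t powr (- \<xi> - 1))"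
  have pw: "t powr (- \<xi>) * t powr e / t = t powr (e - \<xi> - 1)" if "t > 0" for t e :: real
  proof -
    have "t powr (e - \<xi> - 1) = t powr e / t powr \<xi> / t" using that by (simp add: powr_diff)
    thus ?thesis using that by (simp add: powr_minus_divide field_simps)
  qed
  have pt: "ennreal ((t powr (- \<xi>) * f t) powr 1 / t) * indicator {0<..} t
        \<le> ennreal (g1 t) * indicator {0..s} t + ennreal (g2 t) * indicator {s..} t" for t
  proof (cases "t > 0")
    case False thus ?thesis by simp
  next
    case True
    have e1: "(t powr (- \<xi>) * f t) powr 1 / t = t powr (- \<xi>) * f t / t"
      using nn[OF True] by (simp add: powr_one)
    show ?thesis
    proof (cases "t \<le> s")
      case True2: True
      have "t powr (- \<xi>) * f t / t \<le> t powr (- \<xi>) * (a * t powr \<theta>) / t"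
        using lo[OF True True2] True by (intro divide_right_mono mult_left_mono) auto
      also have "\<dots> = a * (t powr (- \<xi>) * t powr \<theta> / t)" by (simp add: divide_inverse mult_ac)
      also have "\<dots> = g1 t" unfolding g1_def pw[OF True, of \<theta>] ..
      finally have le: "t powr (- \<xi>) * f t / t \<le> g1 t" .
      have "ennreal (t powr (- \<xi>) * f t / t) \<le> ennreal (g1 t)" using le by (rule ennreal_leI)
      also have "\<dots> \<le> ennreal (g1 t) + ennreal (g2 t) * indicator {s..} t" by simp
      finally show ?thesis using True True2 e1 by simp
    next
      case False
      have "t powr (- \<xi>) * f t / t \<le> t powr (- \<xi>) * D / t"
        using hi False True by (intro divide_right_mono mult_left_mono) auto
      also have "\<dots> = D * (t powr (- \<xi>) * t powr 0 / t)" using True by (simp add: divide_inverse mult_ac)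
      also have "\<dots> = g2 t" unfolding g2_def pw[OF True, of 0] by simp
      finally have le: "t powr (- \<xi>) * f t / t \<le> g2 t" .
      have "ennreal (t powr (- \<xi>) * f t / t) \<le> ennreal (g2 t)" using le by (rule ennreal_leI)
      thus ?thesis using True False e1 by simp
    qed
  qed
  have "(\<integral>\<^sup>+ t. ennreal ((t powr (- \<xi>) * f t) powr 1 / t) * indicator {0<..} t \<partial>lborel)
      \<le> (\<integral>\<^sup>+ t. ennreal (g1 t) * indicator {0..s} t + ennreal (g2 t) * indicator {s..} t \<partial>lborel)"
    by (rule nn_integral_mono) (rule pt)
  also have "\<dots> = (\<integral>\<^sup>+ t. ennreal (g1 t) * indicator {0..s} t \<partial>lborel) + (\<integral>\<^sup>+ t. ennreal (g2 t) * indicator {s..} t \<partial>lborel)"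
    unfolding g1_def g2_def by (rule nn_integral_add) auto
  also have "(\<integral>\<^sup>+ t. ennreal (g1 t) * indicator {0..s} t \<partial>lborel) = ennreal (a * s powr (\<theta> - \<xi>) / (\<theta> - \<xi>))"
  proof -
    have "((\<lambda>x. x powr (\<theta> - \<xi> - 1)) has_integral (s powr (\<theta> - \<xi> - 1 + 1) / (\<theta> - \<xi> - 1 + 1))) {0..s}"
      using xi s by (intro has_integral_powr_from_0) auto
    hence h: "((\<lambda>x. a * x powr (\<theta> - \<xi> - 1)) has_integral (a * (s powr (\<theta> - \<xi> - 1 + 1) / (\<theta> - \<xi> - 1 + 1)))) {0..s}"
      by (rule has_integral_mult_right)
    have v: "a * (s powr (\<theta> - \<xi> - 1 + 1) / (\<theta> - \<xi> - 1 + 1)) = a * s powr (\<theta> - \<xi>) / (\<theta> - \<xi>)" by simp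
    have "(g1 has_integral (a * s powr (\<theta> - \<xi>) / (\<theta> - \<xi>))) {0..s}"
      unfolding g1_def using h[unfolded v] .
    thus ?thesis by (intro nn_integral_has_integral_lebesgue') (auto simp: g1_def a)
  qed
  also have "(\<integral>\<^sup>+ t. ennreal (g2 t) * indicator {s..} t \<partial>lborel) = ennreal (D * s powr (- \<xi>) / \<xi>)"
  proof -
    have "((\<lambda>x. x powr (- \<xi> - 1)) has_integral (-(s powr (- \<xi> - 1 + 1)) / (- \<xi> - 1 + 1))) {s..}"
      using xi s by (intro has_integral_powr_to_inf) auto
    hence h: "((\<lambda>x. D * x powr (- \<xi> - 1)) has_integral (D * (-(s powr (- \<xi> - 1 + 1)) / (- \<xi> - 1 + 1)))) {s..}"
      by (rule has_integral_mult_right)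
    have v: "D * (-(s powr (- \<xi> - 1 + 1)) / (- \<xi> - 1 + 1)) = D * s powr (- \<xi>) / \<xi>" by simp
    have "(g2 has_integral (D * s powr (- \<xi>) / \<xi>)) {s..}"
      unfolding g2_def using h[unfolded v] .
    thus ?thesis by (intro nn_integral_has_integral_lebesgue') (auto simp: g2_def D)
  qed
  also have "ennreal (a * s powr (\<theta> - \<xi>) / (\<theta> - \<xi>)) + ennreal (D * s powr (- \<xi>) / \<xi>)
      = ennreal (a * s powr (\<theta> - \<xi>) / (\<theta> - \<xi>) + D * s powr (- \<xi>) / \<xi>)"
    using xi a D by (intro ennreal_plus[symmetric]) auto
  finally show ?thesis .
qed

lemma E_est:
  fixes A :: "'a::real_normed_vector \<Rightarrow> 'y::real_inner"
  assumes lin: "bounded_linear A" and M: "M \<ge> 1"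
    and A_equiv: "\<forall>x. norm x / M \<le> norm (A x) \<and> norm (A x) \<le> M * norm x"
    and ns: "normed_subspace S nX" and u: "u > 1"
    and lc: "lc_vector_topology S \<tau>"
    and cpt: "\<forall>c. compactin \<tau> {x \<in> S. Rpen nX u x \<le> c}"
    and cont: "\<forall>z. continuous_map \<tau> euclideanreal (\<lambda>x. inner (A x) z)"
    and qn: "quasi_normed_subspace (K1set A S nX u) nK"
    and K1e: "\<forall>x \<in> K1set A S nX u. rho A S nX u 1 x \<le> ereal M * ereal (nK x powr (u - 1))"
    and x: "x \<in> S" and rr: "rr > 0" and ib: "interp_inf_norm (K1set A S nX u) nK \<theta> x \<le> ereal rr"
    and gx: "norm (g - A x) \<le> \<delta>" and al: "\<alpha> > 0" and xh: "xh \<in> Rmin A S nX u \<alpha> g"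
    and t: "t > 0"
  shows "norm (g - A xh) \<le> \<delta> + 2 * M * rr * t powr \<theta> + 3 * \<alpha> * M * (2 * rr * t powr \<theta> / t) powr (u - 1)"
proof -
  let ?K = "K1set A S nX u"
  have linA: "linear A" using lin bounded_linear.linear by blast
  have subK: "subspace ?K" and nnK: "\<forall>z\<in>?K. nK z \<ge> 0" using qn unfolding quasi_normed_subspace_def by auto
  have "0 \<in> ?K" using subK by (simp add: subspace_0)
  hence Kne: "?K \<noteq> {}" by auto
  obtain z where z: "z \<in> ?K" "norm (x - z) + t * nK z < 2 * rr * t powr \<theta>"
    using interp_get[OF ib t rr Kne nnK] by blast
  have zS: "z \<in> S" using z(1) unfolding K1set_def by auto
  obtain za where za: "za \<in> Rmin A S nX u \<alpha> (A z)"
    using exists_min[OF linA ns _ al lc cpt cont] u by force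
  have k: "norm (g - A xh) \<le> norm (g - A za) + 2 * norm (A z - A za)"
    using key_ineq[OF linA ns _ al za xh] u by simp
  have "ereal (\<alpha> powr (- 1) * norm (A z - A za)) \<le> rho A S nX u 1 z"
    unfolding rho_def using al za by (intro SUP_upper2[of "(\<alpha>, za)"]) auto
  also have "\<dots> \<le> ereal M * ereal (nK z powr (u - 1))" using K1e z(1) by blast
  finally have "\<alpha> powr (- 1) * norm (A z - A za) \<le> M * nK z powr (u - 1)" by simp
  hence r1: "norm (A z - A za) \<le> \<alpha> * M * nK z powr (u - 1)"
    using al by (simp add: powr_minus_divide field_simps)
  have nz: "nK z \<le> 2 * rr * t powr \<theta> / t"
    using z(2) t by (simp add: field_simps) (smt (verit) norm_ge_zero mult.commute)
  have "nK z powr (u - 1) \<le> (2 * rr * t powr \<theta> / t) powr (u - 1)"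
    using nz nnK z(1) u by (intro powr_mono2) auto
  hence r2: "norm (A z - A za) \<le> \<alpha> * M * (2 * rr * t powr \<theta> / t) powr (u - 1)"
    using r1 al M by (smt (verit) mult_left_mono mult_pos_pos)
  have "norm (A x - A z) = norm (A (x - z))" using linA by (simp add: linear_diff)
  also have "\<dots> \<le> M * norm (x - z)" using A_equiv by blast
  also have "\<dots> \<le> M * (2 * rr * t powr \<theta>)"
    using z(2) nnK z(1) t M by (intro mult_left_mono) (smt (verit) mult_nonneg_nonneg, simp)
  finally have r3: "norm (A x - A z) \<le> 2 * M * rr * t powr \<theta>" by simp
  have "norm (g - A za) \<le> norm (g - A x) + norm (A x - A z) + norm (A z - A za)"
  proof -
    have "g - A za = ((g - A x) + (A x - A z)) + (A z - A za)" by simp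
    hence "norm (g - A za) \<le> norm ((g - A x) + (A x - A z)) + norm (A z - A za)"
      by (metis norm_triangle_ineq)
    also have "norm ((g - A x) + (A x - A z)) \<le> norm (g - A x) + norm (A x - A z)" by (rule norm_triangle_ineq)
    finally show ?thesis by simp
  qed
  thus ?thesis using k gx r2 r3 by linarith
qed

lemma powr_facts:
  fixes rr \<delta> \<theta> u \<xi> :: real
  assumes rr: "rr > 0" and d: "\<delta> > 0" and th: "0 < \<theta>" "\<theta> < 1" and u: "u > 1"
    and s_def: "s = (\<delta> / rr) powr (1 / \<theta>)" and Q_def: "Q = (\<delta> / s) powr (u - 1)"
  shows "s > 0" "rr * s powr \<theta> = \<delta>" "Q > 0"
    "\<And>c. c > 0 \<Longrightarrow> (2 * rr * (c * s) powr \<theta> / (c * s)) powr (u - 1) = 2 powr (u - 1) * c powr ((\<theta> - 1) * (u - 1)) * Q"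
    "rr powr (- (u - 1) / \<theta>) * \<delta> powr (((1 - \<theta>) * (u - 1) + \<theta>) / \<theta>) * Q = \<delta>"
    "rr powr (\<xi> / \<theta>) * \<delta> powr (1 - \<xi> / \<theta>) = rr * s powr (\<theta> - \<xi>)"
    "rr * s powr (\<theta> - \<xi>) = \<delta> * s powr (- \<xi>)"
proof -
  have lns: "ln s = (ln \<delta> - ln rr) / \<theta>" unfolding s_def using rr d th by (simp add: ln_powr ln_div)
  show sp: "s > 0" unfolding s_def using rr d by simp
  show Qp: "Q > 0" unfolding Q_def using sp d by simp
  have lnQ: "ln Q = (u - 1) * (ln \<delta> - ln s)" unfolding Q_def using sp d by (simp add: ln_powr ln_div)
  show "rr * s powr \<theta> = \<delta>"
  proof -
    have "ln (rr * s powr \<theta>) = ln \<delta>" using rr sp th by (simp add: ln_mult ln_powr lns)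
    thus ?thesis using rr sp d by (simp add: ln_inj_iff)
  qed
  show "(2 * rr * (c * s) powr \<theta> / (c * s)) powr (u - 1) = 2 powr (u - 1) * c powr ((\<theta> - 1) * (u - 1)) * Q"
    if c: "c > 0" for c
  proof -
    have "ln ((2 * rr * (c * s) powr \<theta> / (c * s)) powr (u - 1)) = ln (2 powr (u - 1) * c powr ((\<theta> - 1) * (u - 1)) * Q)"
      using rr sp c Qp th by (simp add: ln_mult ln_powr ln_div lnQ lns field_simps)
    moreover have "0 < (2 * rr * (c * s) powr \<theta> / (c * s)) powr (u - 1)" using rr sp c by simp
    moreover have "0 < 2 powr (u - 1) * c powr ((\<theta> - 1) * (u - 1)) * Q" using c Qp by simp
    ultimately show ?thesis using ln_inj_iff by blast
  qed
  show "rr powr (- (u - 1) / \<theta>) * \<delta> powr (((1 - \<theta>) * (u - 1) + \<theta>) / \<theta>) * Q = \<delta>"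
  proof -
    have "ln (rr powr (- (u - 1) / \<theta>) * \<delta> powr (((1 - \<theta>) * (u - 1) + \<theta>) / \<theta>) * Q) = ln \<delta>"
      using rr d sp Qp th by (simp add: ln_mult ln_powr lnQ lns field_simps)
    thus ?thesis using rr d Qp by (simp add: ln_inj_iff)
  qed
  show "rr powr (\<xi> / \<theta>) * \<delta> powr (1 - \<xi> / \<theta>) = rr * s powr (\<theta> - \<xi>)"
  proof -
    have "ln (rr powr (\<xi> / \<theta>) * \<delta> powr (1 - \<xi> / \<theta>)) = ln (rr * s powr (\<theta> - \<xi>))"
      using rr d sp th by (simp add: ln_mult ln_powr lns field_simps)
    thus ?thesis using rr d sp by (simp add: ln_inj_iff)
  qed
  show "rr * s powr (\<theta> - \<xi>) = \<delta> * s powr (- \<xi>)"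
  proof -
    have "ln (rr * s powr (\<theta> - \<xi>)) = ln (\<delta> * s powr (- \<xi>))"
      using rr d sp th by (simp add: ln_mult ln_powr lns field_simps)
    thus ?thesis using rr d sp by (simp add: ln_inj_iff)
  qed
qed

lemma root_bound:
  fixes N k y u :: real
  assumes "N \<ge> 0" "y \<ge> 0" "k > 0" "u > 1" "N powr (u - 1) \<le> k * y powr (u - 1)"
  shows "N \<le> k powr (1 / (u - 1)) * y"
proof -
  have "(N powr (u - 1)) powr (1 / (u - 1)) \<le> (k * y powr (u - 1)) powr (1 / (u - 1))"
    using assms by (intro powr_mono2) auto
  moreover have "(N powr (u - 1)) powr (1 / (u - 1)) = N" using assms by (simp add: powr_powr)
  moreover have "(k * y powr (u - 1)) powr (1 / (u - 1)) = k powr (1 / (u - 1)) * y"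
    using assms by (simp add: powr_mult powr_powr)
  ultimately show ?thesis by simp
qed

lemma small_t:
  fixes t s \<theta> :: real
  assumes "0 < t" "t \<le> s" "0 < \<theta>" "\<theta> < 1"
  shows "t * (s powr \<theta> / s) \<le> t powr \<theta>"
proof -
  have "s powr \<theta> / s = s powr (\<theta> - 1)" using assms by (simp add: powr_diff)
  also have "\<dots> \<le> t powr (\<theta> - 1)" using assms by (intro powr_mono2') auto
  finally have "t * (s powr \<theta> / s) \<le> t * t powr (\<theta> - 1)" using assms by (intro mult_left_mono) auto
  also have "\<dots> = t powr \<theta>" using assms by (simp add: powr_diff)
  finally show ?thesis .
qed

theorem theorem2:
  fixes A :: "'a::banach \<Rightarrow> 'y::{real_inner, complete_space}"
    and S :: "'a set" and nX :: "'a \<Rightarrow> real"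
    and M u :: real
    and nK :: "'a \<Rightarrow> real"
    and L :: "'a set" and nL :: "'a \<Rightarrow> real"
    and \<xi> \<theta> cl cr cD CD :: real
  assumes A_lin: "bounded_linear A"
    and M_ge: "M \<ge> 1"
    and A_equiv: "\<forall>x. norm x / M \<le> norm (A x) \<and> norm (A x) \<le> M * norm x"
    and X_banach: "banach_subspace S nX"
    and X_emb: "\<exists>c. \<forall>x\<in>S. norm x \<le> c * nX x"
    and X_dense: "closure S = UNIV"
    and u_gt: "u > 1"
    and tau: "\<exists>\<tau>. lc_vector_topology S \<tau> \<and>
                 (\<forall>c. compactin \<tau> {x \<in> S. Rpen nX u x \<le> c}) \<and>
                 (\<forall>z. continuous_map \<tau> euclideanreal (\<lambda>x. inner (A x) z))"
    and K1_qb: "quasi_banach_subspace (K1set A S nX u) nK"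
    and K1_equiv: "\<forall>x \<in> K1set A S nX u.
                     rho A S nX u 1 x \<le> ereal M * ereal (nK x powr (u - 1)) \<and>
                     ereal (nK x powr (u - 1)) \<le> ereal M * rho A S nX u 1 x"
    and L_banach: "banach_subspace L nL"
    and L_emb: "\<exists>c. \<forall>x\<in>L. norm x \<le> c * nL x"
    and xi_pos: "0 < \<xi>" and xi_theta: "\<xi> < \<theta>" and theta_lt: "\<theta> < 1"
    and cl_pos: "cl > 0" and cr_cl: "cr \<ge> cl"
    and cD_gt: "cD > 1" and CD_cD: "CD > cD"
    and interp_emb: "\<exists>c. \<forall>x \<in> interp_q_space (K1set A S nX u) nK \<xi> 1.
                        x \<in> L \<and> nL x \<le> c * interp_q_norm (K1set A S nX u) nK \<xi> 1 x"
  shows "\<exists>C>0. \<forall>x \<delta> rr g \<alpha> xh.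
           x \<in> S \<and> \<delta> > 0 \<and> rr > 0 \<and>
           interp_inf_norm (K1set A S nX u) nK \<theta> x \<le> ereal rr \<and>
           norm (g - A x) \<le> \<delta> \<and> \<alpha> > 0 \<and> xh \<in> Rmin A S nX u \<alpha> g \<and>
           ((cl * rr powr (- (u - 1) / \<theta>) * \<delta> powr (((1 - \<theta>) * (u - 1) + \<theta>) / \<theta>) \<le> \<alpha> \<and>
             \<alpha> \<le> cr * rr powr (- (u - 1) / \<theta>) * \<delta> powr (((1 - \<theta>) * (u - 1) + \<theta>) / \<theta>))
            \<or> (cD * \<delta> \<le> norm (g - A xh) \<and> norm (g - A xh) \<le> CD * \<delta>))
           \<longrightarrow> x - xh \<in> L \<and> nL (x - xh) \<le> C * rr powr (\<xi> / \<theta>) * \<delta> powr (1 - \<xi> / \<theta>)"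
proof -
  let ?K = "K1set A S nX u"
  obtain \<tau> where lc: "lc_vector_topology S \<tau>" and cpt: "\<forall>c. compactin \<tau> {x \<in> S. Rpen nX u x \<le> c}"
    and cont: "\<forall>z. continuous_map \<tau> euclideanreal (\<lambda>x. inner (A x) z)" using tau by blast
  have ns: "normed_subspace S nX" using X_banach unfolding banach_subspace_def by blast
  have qn: "quasi_normed_subspace ?K nK" using K1_qb unfolding quasi_banach_subspace_def by blast
  have qnd: "subspace ?K \<and> (\<forall>x\<in>?K. 0 \<le> nK x \<and> (nK x = 0 \<longleftrightarrow> x = 0)) \<and>
     (\<forall>c. \<forall>x\<in>?K. nK (c *\<^sub>R x) = \<bar>c\<bar> * nK x) \<and>
     (\<exists>K\<ge>1. \<forall>x\<in>?K. \<forall>y\<in>?K. nK (x + y) \<le> K * (nK x + nK y))"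
    using qn unfolding quasi_normed_subspace_def .
  obtain Kq where Kq: "Kq \<ge> 1" "\<forall>x\<in>?K. \<forall>y\<in>?K. nK (x + y) \<le> Kq * (nK x + nK y)"
    using qnd[THEN conjunct2, THEN conjunct2, THEN conjunct2] by blast
  have subK: "subspace ?K" using qnd by (rule conjunct1)
  have homK: "\<forall>c. \<forall>x\<in>?K. nK (c *\<^sub>R x) = \<bar>c\<bar> * nK x"
    using qnd[THEN conjunct2, THEN conjunct2, THEN conjunct1] .
  have nz: "\<forall>x\<in>?K. 0 \<le> nK x \<and> (nK x = 0 \<longleftrightarrow> x = 0)" using qnd[THEN conjunct2, THEN conjunct1] .
  have nnK: "\<forall>z\<in>?K. nK z \<ge> 0" using nz by blast
  have zK: "\<forall>x\<in>?K. (nK x = 0 \<longleftrightarrow> x = 0)" using nz by blast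
  have K0: "0 \<in> ?K" using subK by (simp add: subspace_0)
  have nK0: "nK 0 = 0" using zK K0 by blast
  have KS: "?K \<subseteq> S" unfolding K1set_def by auto
  obtain cL where cL: "\<forall>x \<in> interp_q_space ?K nK \<xi> 1. x \<in> L \<and> nL x \<le> cL * interp_q_norm ?K nK \<xi> 1 x"
    using interp_emb by blast
  have linA: "linear A" using A_lin bounded_linear.linear by blast
  have Mp: "M > 0" using M_ge by simp
  define lam where "lam = ((cD - 1) / (4 * M)) powr (1 / \<theta>)"
  have lamp: "lam > 0" unfolding lam_def using cD_gt Mp by simp
  have lamt: "lam powr \<theta> = (cD - 1) / (4 * M)" unfolding lam_def using cD_gt Mp xi_pos xi_theta
    by (simp add: powr_powr)
  define B where "B = 3 * M * 2 powr (u - 1)"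
  have Bp: "B > 0" unfolding B_def using Mp by simp
  define cE where "cE = 1 + 2 * M + B * cr + CD"
  have cEp: "cE > 0" unfolding cE_def using Bp Mp cr_cl cl_pos CD_cD cD_gt by (smt (verit) mult_pos_pos)
  define cA where "cA = min cl (((cD - 1) / 2) / (B * lam powr ((\<theta> - 1) * (u - 1))))"
  have cAp: "cA > 0" unfolding cA_def using cl_pos cD_gt Bp lamp by simp
  define cN where "cN = (2 * M * cE / cA) powr (1 / (u - 1))"
  have cNp: "cN \<ge> 0" unfolding cN_def by simp
  define C where "C = max cL 1 * (Kq * (2 + cN) / (\<theta> - \<xi>) + M * (1 + cE) / \<xi>)"
  have c2: "2 + cN > 0" "1 + cE > 0" using cNp cEp by auto
  have "Kq * (2 + cN) / (\<theta> - \<xi>) > 0" using Kq(1) c2 xi_theta by (intro divide_pos_pos mult_pos_pos) auto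
  moreover have "M * (1 + cE) / \<xi> > 0" using Mp c2 xi_pos by (intro divide_pos_pos mult_pos_pos) auto
  moreover have "max cL 1 > 0" by simp
  ultimately have Cp: "C > 0" unfolding C_def by (intro mult_pos_pos add_pos_pos)
  show ?thesis
  proof (rule exI[of _ C], intro conjI allI impI)
    show "C > 0" by (rule Cp)
    fix x \<delta> rr g \<alpha> xh
    assume H: "x \<in> S \<and> \<delta> > 0 \<and> rr > 0 \<and>
           interp_inf_norm ?K nK \<theta> x \<le> ereal rr \<and>
           norm (g - A x) \<le> \<delta> \<and> \<alpha> > 0 \<and> xh \<in> Rmin A S nX u \<alpha> g \<and>
           ((cl * rr powr (- (u - 1) / \<theta>) * \<delta> powr (((1 - \<theta>) * (u - 1) + \<theta>) / \<theta>) \<le> \<alpha> \<and>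
             \<alpha> \<le> cr * rr powr (- (u - 1) / \<theta>) * \<delta> powr (((1 - \<theta>) * (u - 1) + \<theta>) / \<theta>))
            \<or> (cD * \<delta> \<le> norm (g - A xh) \<and> norm (g - A xh) \<le> CD * \<delta>))"
    hence x: "x \<in> S" and d: "\<delta> > 0" and rr: "rr > 0" and ib: "interp_inf_norm ?K nK \<theta> x \<le> ereal rr"
      and gx: "norm (g - A x) \<le> \<delta>" and al: "\<alpha> > 0" and xh: "xh \<in> Rmin A S nX u \<alpha> g"
      by auto
    define E where "E = norm (g - A xh)"
    define s where "s = (\<delta> / rr) powr (1 / \<theta>)"
    define Q where "Q = (\<delta> / s) powr (u - 1)"
    define \<Lambda> where "\<Lambda> = rr powr (- (u - 1) / \<theta>) * \<delta> powr (((1 - \<theta>) * (u - 1) + \<theta>) / \<theta>)"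
    have th0: "0 < \<theta>" using xi_pos xi_theta by simp
    note pf = powr_facts[OF rr d th0 theta_lt u_gt s_def Q_def]
    have sp: "s > 0" by (rule pf(1))
    have rs: "rr * s powr \<theta> = \<delta>" by (rule pf(2))
    have Qp: "Q > 0" by (rule pf(3))
    have LQ: "\<Lambda> * Q = \<delta>" unfolding \<Lambda>_def by (rule pf(5))
    have P1: "rr powr (\<xi> / \<theta>) * \<delta> powr (1 - \<xi> / \<theta>) = rr * s powr (\<theta> - \<xi>)" by (rule pf(6))
    have P2: "rr * s powr (\<theta> - \<xi>) = \<delta> * s powr (- \<xi>)" by (rule pf(7))
    have pw: "(2 * rr * (c * s) powr \<theta> / (c * s)) powr (u - 1) = 2 powr (u - 1) * c powr ((\<theta> - 1) * (u - 1)) * Q"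
      if "c > 0" for c using pf(4)[OF that] .
    note Eest = E_est[OF A_lin M_ge A_equiv ns u_gt lc cpt cont qn _ x rr ib gx al xh]
    have K1e: "\<forall>x \<in> ?K. rho A S nX u 1 x \<le> ereal M * ereal (nK x powr (u - 1))" using K1_equiv by blast
    have E1: "E \<le> \<delta> + 2 * M * \<delta> + B * (\<alpha> * Q)"
    proof -
      have "E \<le> \<delta> + 2 * M * rr * (1 * s) powr \<theta> + 3 * \<alpha> * M * (2 * rr * (1 * s) powr \<theta> / (1 * s)) powr (u - 1)"
        unfolding E_def using Eest[OF K1e, of "1 * s"] sp by simp
      also have "\<dots> = \<delta> + 2 * M * \<delta> + B * (\<alpha> * Q)"
        unfolding pw[OF zero_less_one] B_def using rs by (simp add: mult_ac)
      finally show ?thesis .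
    qed
    have EA: "E \<le> cE * \<delta> \<and> cA * \<delta> \<le> \<alpha> * Q"
    proof (cases "cl * \<Lambda> \<le> \<alpha> \<and> \<alpha> \<le> cr * \<Lambda>")
      case True
      have "\<alpha> * Q \<le> cr * \<Lambda> * Q" using True Qp by (intro mult_right_mono) auto
      hence aQ: "\<alpha> * Q \<le> cr * \<delta>" using LQ by (simp add: mult.assoc)
      have "cl * \<Lambda> * Q \<le> \<alpha> * Q" using True Qp by (intro mult_right_mono) auto
      hence aQ2: "cl * \<delta> \<le> \<alpha> * Q" using LQ by (simp add: mult.assoc)
      have "B * (\<alpha> * Q) \<le> B * (cr * \<delta>)" using aQ Bp by (intro mult_left_mono) auto
      moreover have "0 \<le> CD * \<delta>" using d CD_cD cD_gt by simp
      moreover have "cE * \<delta> = \<delta> + 2 * M * \<delta> + B * (cr * \<delta>) + CD * \<delta>" unfolding cE_def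
        by (simp add: algebra_simps)
      ultimately have "E \<le> cE * \<delta>" using E1 by linarith
      moreover have "cA * \<delta> \<le> cl * \<delta>" unfolding cA_def using d by (intro mult_right_mono) auto
      ultimately show ?thesis using aQ2 by linarith
    next
      case False
      hence disc: "cD * \<delta> \<le> E \<and> E \<le> CD * \<delta>" using H unfolding E_def \<Lambda>_def by auto
      have "E \<le> \<delta> + 2 * M * rr * (lam * s) powr \<theta> + 3 * \<alpha> * M * (2 * rr * (lam * s) powr \<theta> / (lam * s)) powr (u - 1)"
        unfolding E_def using Eest[OF K1e, of "lam * s"] sp lamp by simp
      also have "2 * M * rr * (lam * s) powr \<theta> = (cD - 1) / 2 * \<delta>"
      proof -
        have "2 * M * rr * (lam * s) powr \<theta> = 2 * M * lam powr \<theta> * (rr * s powr \<theta>)"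
          using lamp sp by (simp add: powr_mult mult_ac)
        also have "\<dots> = 2 * M * ((cD - 1) / (4 * M)) * \<delta>" using lamt rs by simp
        also have "\<dots> = (cD - 1) / 2 * \<delta>" using Mp by (simp add: field_simps)
        finally show ?thesis .
      qed
      also have "3 * \<alpha> * M * (2 * rr * (lam * s) powr \<theta> / (lam * s)) powr (u - 1)
           = (B * lam powr ((\<theta> - 1) * (u - 1))) * (\<alpha> * Q)"
        unfolding pw[OF lamp] B_def by (simp add: mult_ac)
      finally have Eb: "E \<le> \<delta> + (cD - 1) / 2 * \<delta> + (B * lam powr ((\<theta> - 1) * (u - 1))) * (\<alpha> * Q)" .
      have "(cD - 1) / 2 * \<delta> = (cD * \<delta> - \<delta>) / 2" by (simp add: algebra_simps)
      hence "(cD - 1) / 2 * \<delta> \<le> (B * lam powr ((\<theta> - 1) * (u - 1))) * (\<alpha> * Q)"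
        using disc Eb by argo
      hence "((cD - 1) / 2) / (B * lam powr ((\<theta> - 1) * (u - 1))) * \<delta> \<le> \<alpha> * Q"
        using Bp lamp by (simp add: field_simps)
      moreover have "cA * \<delta> \<le> ((cD - 1) / 2) / (B * lam powr ((\<theta> - 1) * (u - 1))) * \<delta>"
        unfolding cA_def using d by (intro mult_right_mono) auto
      moreover have "E \<le> cE * \<delta>"
      proof -
        have "cE * \<delta> = \<delta> + 2 * M * \<delta> + B * (cr * \<delta>) + CD * \<delta>" unfolding cE_def
          by (simp add: algebra_simps)
        moreover have "0 \<le> 2 * M * \<delta>" using Mp d by simp
        moreover have "0 \<le> B * (cr * \<delta>)" using Bp cr_cl cl_pos d by simp
        ultimately show ?thesis using disc d by linarith
      qed
      ultimately show ?thesis by linarith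
    qed
    hence Ec: "E \<le> cE * \<delta>" and Ac: "cA * \<delta> \<le> \<alpha> * Q" by auto
    have xhS: "xh \<in> S" using xh unfolding Rmin_def by auto
    have rxh: "rho A S nX u 1 xh \<le> ereal (2 * E / \<alpha>)"
      unfolding E_def using rho_min_bound[OF linA ns _ al xh] u_gt by simp
    hence xhK: "xh \<in> ?K" unfolding K1set_def using xhS by (auto intro: le_less_trans)
    define N where "N = nK xh"
    have Nn: "N \<ge> 0" unfolding N_def using nnK xhK by blast
    have "ereal (N powr (u - 1)) \<le> ereal M * rho A S nX u 1 xh" using K1_equiv xhK unfolding N_def by blast
    also have "\<dots> \<le> ereal M * ereal (2 * E / \<alpha>)" using rxh Mp by (intro ereal_mult_left_mono) auto
    finally have "N powr (u - 1) \<le> M * (2 * E / \<alpha>)" by simp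
    also have "\<dots> \<le> M * (2 * (cE * \<delta>) / \<alpha>)" using Ec al Mp by (intro mult_left_mono divide_right_mono) auto
    also have "\<dots> = (2 * M * cE) * (\<delta> / \<alpha>)" by simp
    also have "\<delta> / \<alpha> \<le> Q / cA" using Ac al cAp by (simp add: field_simps mult.commute)
    hence "(2 * M * cE) * (\<delta> / \<alpha>) \<le> (2 * M * cE) * (Q / cA)" using Mp cEp by (intro mult_left_mono) auto
    also have "(2 * M * cE) * (Q / cA) = (2 * M * cE / cA) * (\<delta> / s) powr (u - 1)" unfolding Q_def by simp
    finally have Nf: "N powr (u - 1) \<le> (2 * M * cE / cA) * (\<delta> / s) powr (u - 1)" .
    have "N \<le> (2 * M * cE / cA) powr (1 / (u - 1)) * (\<delta> / s)"
      by (rule root_bound[OF Nn _ _ u_gt Nf]) (use d sp Mp cEp cAp in auto)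
    hence Nb: "N \<le> cN * (\<delta> / s)" unfolding cN_def .
    define e where "e = x - xh"
    define a where "a = Kq * (2 + cN) * rr"
    define D where "D = M * (1 + cE) * \<delta>"
    have nK_neg: "nK (- xh) = N" unfolding N_def using homK xhK by (metis abs_neg_one mult_1 scaleR_minus1_left)
    have Kfn: "0 \<le> Kfun ?K nK e t" if "t > 0" for t using Kfun_nonneg[OF _ nnK that] K0 by blast
    have Klo: "Kfun ?K nK e t \<le> a * t powr \<theta>" if t: "0 < t" "t \<le> s" for t
    proof -
      obtain z where z: "z \<in> ?K" "norm (x - z) + t * nK z < 2 * rr * t powr \<theta>"
        using interp_get[OF ib t(1) rr _ nnK] K0 by blast
      have zx: "z - xh \<in> ?K" using subK z(1) xhK by (simp add: subspace_diff)
      have "Kfun ?K nK e t \<le> norm (e - (z - xh)) + t * nK (z - xh)"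
        by (rule Kfun_le[OF zx nnK t(1)])
      also have "e - (z - xh) = x - z" unfolding e_def by simp
      also have "nK (z - xh) \<le> Kq * (nK z + N)"
        using Kq(2) z(1) xhK subK nK_neg by (metis diff_conv_add_uminus subspace_neg)
      hence "t * nK (z - xh) \<le> t * (Kq * (nK z + N))" using t by (intro mult_left_mono) auto
      hence "norm (x - z) + t * nK (z - xh) \<le> Kq * (norm (x - z) + t * nK z) + Kq * (t * N)"
        using Kq(1) by (smt (verit, best) mult_le_cancel_right1 norm_ge_zero distrib_left mult.left_commute)
      also have "\<dots> \<le> Kq * (2 * rr * t powr \<theta>) + Kq * (t * (cN * (\<delta> / s)))"
        using z(2) Kq(1) Nb t cNp by (intro add_mono mult_left_mono) auto
      also have "t * (cN * (\<delta> / s)) = cN * rr * (t * (s powr \<theta> / s))" using rs by (simp add: field_simps)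
      also have "\<dots> \<le> cN * rr * t powr \<theta>"
        using small_t[OF t th0 theta_lt] cNp rr by (intro mult_left_mono) auto
      finally show ?thesis unfolding a_def using Kq(1) by (simp add: algebra_simps)
    qed
    have Khi: "Kfun ?K nK e t \<le> D" if t: "t > s" for t
    proof -
      have "Kfun ?K nK e t \<le> norm (e - 0) + t * nK 0" using Kfun_le[OF K0 nnK] t sp by simp
      also have "\<dots> = norm e" using nK0 by simp
      also have "norm e \<le> M * norm (A e)" using A_equiv Mp by (simp add: divide_le_eq mult.commute)
      also have "A e = (g - A xh) - (g - A x)" unfolding e_def using linA by (simp add: linear_diff)
      also have "norm \<dots> \<le> E + \<delta>" unfolding E_def using gx by (smt (verit) norm_triangle_ineq4)
      hence "M * norm ((g - A xh) - (g - A x)) \<le> M * (E + \<delta>)" using Mp by (intro mult_left_mono) auto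
      also have "\<dots> \<le> D" unfolding D_def using Ec Mp by (simp add: algebra_simps)
      finally show ?thesis .
    qed
    have I: "interp_q_integral ?K nK \<xi> 1 e \<le> ennreal (a * s powr (\<theta> - \<xi>) / (\<theta> - \<xi>) + D * s powr (- \<xi>) / \<xi>)"
    proof -
      have a0: "a \<ge> 0" unfolding a_def using Kq(1) cNp rr by simp
      have D0: "D \<ge> 0" unfolding D_def using Mp cEp d by simp
      show ?thesis unfolding interp_q_integral_def by (rule int_bound[OF Kfn Klo Khi sp xi_pos xi_theta a0 D0])
    qed
    define Bd where "Bd = a * s powr (\<theta> - \<xi>) / (\<theta> - \<xi>) + D * s powr (- \<xi>) / \<xi>"
    have Bd_eq: "Bd = (Kq * (2 + cN) / (\<theta> - \<xi>) + M * (1 + cE) / \<xi>) * (rr powr (\<xi> / \<theta>) * \<delta> powr (1 - \<xi> / \<theta>))"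
      unfolding Bd_def a_def D_def P1 using P2 by (simp add: field_simps)
    have Bdn: "Bd \<ge> 0" unfolding Bd_eq using Kq cNp xi_pos xi_theta Mp cEp by (intro mult_nonneg_nonneg add_nonneg_nonneg) auto
    have "interp_q_integral ?K nK \<xi> 1 e < \<infinity>"
      using le_less_trans[OF I[folded Bd_def] ennreal_less_top] by simp
    hence eq: "e \<in> interp_q_space ?K nK \<xi> 1" unfolding interp_q_space_def by simp
    have qn_le: "interp_q_norm ?K nK \<xi> 1 e \<le> Bd" unfolding interp_q_norm_def
      using enn2real_leI[OF Bdn I[folded Bd_def]] by simp
    have qn_nn: "interp_q_norm ?K nK \<xi> 1 e \<ge> 0" unfolding interp_q_norm_def by simp
    have "e \<in> L" and "nL e \<le> cL * interp_q_norm ?K nK \<xi> 1 e" using cL eq by auto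
    moreover have "cL * interp_q_norm ?K nK \<xi> 1 e \<le> max cL 1 * Bd"
      using qn_le qn_nn by (smt (verit) max.cobounded1 max.cobounded2 mult_mono mult_right_mono)
    ultimately have fin: "x - xh \<in> L \<and> nL (x - xh) \<le> C * rr powr (\<xi> / \<theta>) * \<delta> powr (1 - \<xi> / \<theta>)"
      unfolding e_def C_def Bd_eq by (simp add: mult.assoc)
    thus "x - xh \<in> L" by (rule conjunct1)
    show "nL (x - xh) \<le> C * rr powr (\<xi> / \<theta>) * \<delta> powr (1 - \<xi> / \<theta>)" using fin by (rule conjunct2)
  qed
qed

end
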